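(* Let $\mathfrak A\subseteq\mathfrak G_\bullet$ be a log-free subgrid. Then there is a hereditary log-free subgrid $\mathfrak B$ with $\mathfrak B\supseteq\mathfrak A$ such that the height of $\mathfrak B$ equals the height of $\mathfrak A$.
   Context: Log-free transmonomials: $\mathfrak G_0=\{x^b:b\in\mathbb R\}$, and for $N\ge1$, $\mathfrak G_N=\{x^be^L: b\in\mathbb R,\ L \text{ a purely large transseries with } \operatorname{supp}L\subseteq\mathfrak G_{N-1}\}$; $\mathfrak G_\bullet=\bigcup_N\mathfrak G_N$, with the usual ordering of transmonomials. A ratio set is a finite set of monomials $\prec1$; a grid is a set $\mathfrak J^{\boldsymbol\mu,\mathbf m}=\{\boldsymbol\mu^{\mathbf k}:\mathbf k\in\mathbb Z^n,\mathbf k\ge\mathbf m\}$ for a ratio set $\boldsymbol\mu=\{\mu_1,\dots,\mu_n\}$, and a subgrid is a subset of a grid. The height of a log-free subgrid is the least $N$ with $\mathfrak A\subseteq\mathfrak G_N$. A log-free subgrid $\mathfrak B$ is hereditary if for every $x^be^L\in\mathfrak B$ ($b\in\mathbb R$, $L$ purely large log-free) we have $\operatorname{supp}L\subseteq\mathfrak B$. *)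

theory Defs
  imports Complex_Main "HOL-Library.Countable_Set_Type"
begin

text \<open>Log-free transmonomials x^b e^L.  A (grid-based) transseries L is encoded by the
countable set of pairs (monomial, nonzero coefficient) of its support (its graph).
Together with the well-formedness conditions built into the sets G N below, this
representation is canonical: every element of G N is a unique term.\<close>

datatype mono = Mono real "(mono \<times> real) cset"

definition supp :: "(mono \<times> real) cset \<Rightarrow> mono set" where
  "supp L = fst ` rcset L"

definition coeff :: "(mono \<times> real) cset \<Rightarrow> mono \<Rightarrow> real" where
  "coeff L m = (if m \<in> supp L then (SOME c. (m, c) \<in> rcset L) else 0)"

definition wf_ser :: "(mono \<times> real) cset \<Rightarrow> bool" where
  "wf_ser L \<longleftrightarrow> (\<forall>m c c'. (m, c) \<in> rcset L \<and> (m, c') \<in> rcset L \<longrightarrow> c = c')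
                 \<and> (\<forall>m c. (m, c) \<in> rcset L \<longrightarrow> c \<noteq> 0)"

definition ser_add :: "(mono \<times> real) cset \<Rightarrow> (mono \<times> real) cset \<Rightarrow> (mono \<times> real) cset" where
  "ser_add L M = acset {(m, coeff L m + coeff M m) | m. m \<in> supp L \<union> supp M \<and> coeff L m + coeff M m \<noteq> 0}"

definition ser_neg :: "(mono \<times> real) cset \<Rightarrow> (mono \<times> real) cset" where
  "ser_neg L = cimage (\<lambda>(m, c). (m, - c)) L"

definition mone :: mono where "mone = Mono 0 cempty"

fun mmul :: "mono \<Rightarrow> mono \<Rightarrow> mono" where
  "mmul (Mono b L) (Mono c M) = Mono (b + c) (ser_add L M)"

fun minv :: "mono \<Rightarrow> mono" where
  "minv (Mono b L) = Mono (- b) (ser_neg L)"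

definition mpow :: "mono \<Rightarrow> int \<Rightarrow> mono" where
  "mpow u k = (if 0 \<le> k then (mmul u ^^ nat k) mone else (mmul (minv u) ^^ nat (- k)) mone)"

definition mprod :: "mono list \<Rightarrow> int list \<Rightarrow> mono" where
  "mprod \<mu> k = foldr mmul (map2 mpow \<mu> k) mone"

definition grid :: "mono list \<Rightarrow> int list \<Rightarrow> mono set" where
  "grid \<mu> m0 = {mprod \<mu> k | k. length k = length \<mu> \<and> (\<forall>i < length \<mu>. m0 ! i \<le> k ! i)}"

text \<open>Ordering of monomials at level N (strict "\<prec>"), defined by recursion on the level:
  x^b e^L \<prec> x^c e^M iff L < M (leading coefficient of M - L positive), or L = M and b < c.\<close>
primrec lt :: "nat \<Rightarrow> mono \<Rightarrow> mono \<Rightarrow> bool" where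
  "lt 0 u v = (case u of Mono b L \<Rightarrow> case v of Mono c M \<Rightarrow> b < c)"
| "lt (Suc N) u v = (case u of Mono b L \<Rightarrow> case v of Mono c M \<Rightarrow>
      (\<exists>m. coeff L m < coeff M m \<and> (\<forall>n. lt N m n \<longrightarrow> coeff L n = coeff M n))
      \<or> (L = M \<and> b < c))"

text \<open>The sets G N of log-free transmonomials of height at most N.  For N \<ge> 1 the
exponent L must be a purely large grid-based transseries with support in G (N-1),
i.e. its support is a subgrid with ratio set in G (N-1).\<close>
primrec G :: "nat \<Rightarrow> mono set" where
  "G 0 = {Mono b cempty | b. True}"
| "G (Suc N) = {Mono b L | b L. wf_ser L \<and> supp L \<subseteq> G N
      \<and> (\<forall>m \<in> supp L. lt N mone m)
      \<and> (\<exists>\<mu> m0. set \<mu> \<subseteq> G N \<and> (\<forall>u \<in> set \<mu>. lt N u mone) \<and> length m0 = length \<mu>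
               \<and> supp L \<subseteq> grid \<mu> m0)}"

definition Gall :: "mono set" where
  "Gall = (\<Union>N. G N)"

definition mono_lt :: "mono \<Rightarrow> mono \<Rightarrow> bool" where
  "mono_lt u v \<longleftrightarrow> (\<exists>N. u \<in> G N \<and> v \<in> G N \<and> lt N u v)"

definition logfree_subgrid :: "mono set \<Rightarrow> bool" where
  "logfree_subgrid A \<longleftrightarrow> A \<subseteq> Gall \<and>
     (\<exists>\<mu> m0. set \<mu> \<subseteq> Gall \<and> (\<forall>u \<in> set \<mu>. mono_lt u mone) \<and> length m0 = length \<mu>
            \<and> A \<subseteq> grid \<mu> m0)"

definition height :: "mono set \<Rightarrow> nat" where
  "height A = (LEAST N. A \<subseteq> G N)"

definition hereditary :: "mono set \<Rightarrow> bool" where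
  "hereditary B \<longleftrightarrow> (\<forall>b L. Mono b L \<in> B \<longrightarrow> supp L \<subseteq> B)"

end

theory Submission
  imports Defs
begin

fun expo :: "mono \<Rightarrow> (mono \<times> real) cset" where
  "expo (Mono b L) = L"

lemma rcset_cempty[simp]: "rcset cempty = {}"
  by (simp add: bot_cset.rep_eq)

lemma supp_cempty[simp]: "supp cempty = {}"
  by (simp add: supp_def)

lemma countable_supp: "countable (supp L)"
  unfolding supp_def by simp

lemma rcset_ser_add:
  "rcset (ser_add L M) = {(m, coeff L m + coeff M m) | m. m \<in> supp L \<union> supp M \<and> coeff L m + coeff M m \<noteq> 0}"
proof -
  have "{(m, coeff L m + coeff M m) | m. m \<in> supp L \<union> supp M \<and> coeff L m + coeff M m \<noteq> 0}
        \<subseteq> (\<lambda>m. (m, coeff L m + coeff M m)) ` (supp L \<union> supp M)" by blast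
  moreover have "countable ((\<lambda>m. (m, coeff L m + coeff M m)) ` (supp L \<union> supp M))"
    using countable_supp by blast
  ultimately show ?thesis unfolding ser_add_def
    by (subst acset_inverse) (auto intro: countable_subset)
qed

lemma supp_ser_add: "supp (ser_add L M) \<subseteq> supp L \<union> supp M"
  unfolding supp_def[of "ser_add L M"] rcset_ser_add by auto

lemma wf_ser_add: "wf_ser (ser_add L M)"
  unfolding wf_ser_def rcset_ser_add by auto

lemma supp_ser_neg: "supp (ser_neg L) = supp L"
  unfolding supp_def ser_neg_def by (force simp: cimage.rep_eq)

lemma coeff_wf: "wf_ser L \<Longrightarrow> (m, c) \<in> rcset L \<Longrightarrow> coeff L m = c"
  unfolding coeff_def supp_def wf_ser_def
  by (auto intro!: some_equality) (metis fst_conv image_eqI)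

lemma ser_add_cempty: "wf_ser L \<Longrightarrow> ser_add cempty L = L"
proof -
  assume w: "wf_ser L"
  have "rcset (ser_add cempty L) = rcset L"
  proof
    show "rcset (ser_add cempty L) \<subseteq> rcset L"
    proof
      fix p assume "p \<in> rcset (ser_add cempty L)"
      then obtain m where p: "p = (m, coeff L m)" "m \<in> supp L"
        by (auto simp: rcset_ser_add coeff_def)
      then obtain c where "(m, c) \<in> rcset L" by (auto simp: supp_def)
      with w p show "p \<in> rcset L" using coeff_wf by auto
    qed
  next
    show "rcset L \<subseteq> rcset (ser_add cempty L)"
    proof
      fix p assume pL: "p \<in> rcset L"
      obtain m c where p: "p = (m, c)" by force
      have "coeff L m = c" using coeff_wf w pL p by auto
      moreover have "c \<noteq> 0" using w pL p unfolding wf_ser_def by auto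
      moreover have "m \<in> supp L" using pL p unfolding supp_def by force
      ultimately show "p \<in> rcset (ser_add cempty L)"
        using p by (auto simp: rcset_ser_add coeff_def)
    qed
  qed
  then show ?thesis by (metis rcset_inverse)
qed

lemma acset_empty: "acset {} = cempty"
  by (metis rcset_cempty rcset_inverse)

lemma mmul_mone_mone[simp]: "mmul mone mone = mone"
  unfolding mone_def by (simp add: ser_add_def acset_empty)

lemma mmul_mone_left: "wf_ser (expo u) \<Longrightarrow> mmul mone u = u"
  by (cases u) (simp add: mone_def ser_add_cempty)

lemma wf_foldr: "wf_ser (expo (foldr mmul xs mone))"
proof (cases xs)
  case Nil then show ?thesis by (simp add: mone_def wf_ser_def)
next
  case (Cons a ys)
  then show ?thesis
    by (cases a; cases "foldr mmul ys mone") (simp add: wf_ser_add)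
qed

lemma wf_mprod: "wf_ser (expo (mprod \<mu> k))"
  unfolding mprod_def by (rule wf_foldr)

lemma supp_mmul: "supp (expo (mmul u v)) \<subseteq> supp (expo u) \<union> supp (expo v)"
  by (cases u; cases v) (simp add: supp_ser_add)

lemma supp_foldr: "supp (expo (foldr mmul xs mone)) \<subseteq> (\<Union>x\<in>set xs. supp (expo x))"
proof (induction xs)
  case Nil then show ?case by (simp add: mone_def)
next
  case (Cons a xs)
  then show ?case using supp_mmul[of a "foldr mmul xs mone"] by auto
qed

lemma supp_minv: "supp (expo (minv u)) = supp (expo u)"
  by (cases u) (simp add: supp_ser_neg)

lemma supp_pow: "supp (expo ((mmul u ^^ n) mone)) \<subseteq> supp (expo u)"
proof (induction n)
  case 0 then show ?case by (simp add: mone_def)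
next
  case (Suc n)
  then show ?case using supp_mmul[of u "(mmul u ^^ n) mone"] by auto
qed

lemma supp_mpow: "supp (expo (mpow u k)) \<subseteq> supp (expo u)"
  unfolding mpow_def using supp_pow[where u=u] supp_pow[where u="minv u"] supp_minv[of u] by auto

lemma supp_mprod: "supp (expo (mprod \<mu> k)) \<subseteq> (\<Union>v\<in>set \<mu>. supp (expo v))"
proof -
  have "supp (expo (mprod \<mu> k)) \<subseteq> (\<Union>x\<in>set (map2 mpow \<mu> k). supp (expo x))"
    unfolding mprod_def by (rule supp_foldr)
  also have "\<dots> \<subseteq> (\<Union>v\<in>set \<mu>. supp (expo v))"
    using supp_mpow by (fastforce dest: set_zip_leftD)
  finally show ?thesis .
qed


lemma mpow_zero[simp]: "mpow u 0 = mone"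
  by (simp add: mpow_def)

lemma foldr_mones: "foldr mmul (replicate n mone) x = (mmul mone ^^ n) x"
  by (induction n) auto

lemma pow_mone: "wf_ser (expo x) \<Longrightarrow> (mmul mone ^^ n) x = x"
  by (induction n) (auto simp: mmul_mone_left)

lemma map2_zeros: "map2 mpow \<nu> (replicate (length \<nu>) 0) = replicate (length \<nu>) mone"
  by (induction \<nu>) auto

lemma wf_mone: "wf_ser (expo mone)"
  by (simp add: mone_def wf_ser_def)

definition in_grid :: "mono set \<Rightarrow> bool" where
  "in_grid A \<longleftrightarrow> (\<exists>\<mu> m0. set \<mu> \<subseteq> Gall \<and> (\<forall>u \<in> set \<mu>. mono_lt u mone) \<and> length m0 = length \<mu>
            \<and> A \<subseteq> grid \<mu> m0)"

lemma grid_union: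
  assumes "length m = length \<mu>" "length n = length \<nu>"
  shows "grid \<mu> m \<union> grid \<nu> n \<subseteq> grid (\<mu> @ \<nu>) (map (min 0) m @ map (min 0) n)"
proof
  fix x assume "x \<in> grid \<mu> m \<union> grid \<nu> n"
  then show "x \<in> grid (\<mu> @ \<nu>) (map (min 0) m @ map (min 0) n)"
  proof
    assume "x \<in> grid \<mu> m"
    then obtain k where k: "x = mprod \<mu> k" "length k = length \<mu>" "\<forall>i < length \<mu>. m ! i \<le> k ! i"
      by (auto simp: grid_def)
    let ?k = "k @ replicate (length \<nu>) 0"
    have "mprod (\<mu> @ \<nu>) ?k = foldr mmul (map2 mpow \<mu> k @ replicate (length \<nu>) mone) mone"
      unfolding mprod_def using k(2) by (simp add: zip_append map2_zeros)
    also have "\<dots> = mprod \<mu> k"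
      by (simp add: mprod_def foldr_mones pow_mone wf_mone)
    finally have e: "mprod (\<mu> @ \<nu>) ?k = x" using k by simp
    have "\<forall>i < length (\<mu> @ \<nu>). (map (min 0) m @ map (min 0) n) ! i \<le> ?k ! i"
      using k assms by (auto simp: nth_append)
    then show ?thesis using e k(2) assms unfolding grid_def
      by (intro CollectI exI[of _ ?k]) auto
  next
    assume "x \<in> grid \<nu> n"
    then obtain k where k: "x = mprod \<nu> k" "length k = length \<nu>" "\<forall>i < length \<nu>. n ! i \<le> k ! i"
      by (auto simp: grid_def)
    let ?k = "replicate (length \<mu>) 0 @ k"
    have "mprod (\<mu> @ \<nu>) ?k = foldr mmul (replicate (length \<mu>) mone @ map2 mpow \<nu> k) mone"
      unfolding mprod_def using k(2) by (simp add: zip_append map2_zeros)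
    also have "\<dots> = mprod \<nu> k"
      using wf_mprod[of \<nu> k] by (simp add: mprod_def foldr_mones pow_mone)
    finally have e: "mprod (\<mu> @ \<nu>) ?k = x" using k by simp
    have "\<forall>i < length (\<mu> @ \<nu>). (map (min 0) m @ map (min 0) n) ! i \<le> ?k ! i"
      using k assms by (auto simp: nth_append) (metis less_diff_conv2 add.commute not_less min.coboundedI2 order.trans)
    then show ?thesis using e k(2) assms unfolding grid_def
      by (intro CollectI exI[of _ ?k]) auto
  qed
qed

lemma in_grid_empty: "in_grid {}"
  unfolding in_grid_def by (rule exI[of _ "[]"], rule exI[of _ "[]"]) simp

lemma in_grid_subset: "in_grid B \<Longrightarrow> A \<subseteq> B \<Longrightarrow> in_grid A"
  unfolding in_grid_def by blast

lemma in_grid_Un: "in_grid A \<Longrightarrow> in_grid B \<Longrightarrow> in_grid (A \<union> B)"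
proof -
  assume "in_grid A" "in_grid B"
  then obtain \<mu> m \<nu> n where a: "set \<mu> \<subseteq> Gall" "\<forall>u \<in> set \<mu>. mono_lt u mone" "length m = length \<mu>" "A \<subseteq> grid \<mu> m"
    and b: "set \<nu> \<subseteq> Gall" "\<forall>u \<in> set \<nu>. mono_lt u mone" "length n = length \<nu>" "B \<subseteq> grid \<nu> n"
    unfolding in_grid_def by blast
  have "A \<union> B \<subseteq> grid (\<mu> @ \<nu>) (map (min 0) m @ map (min 0) n)"
    using grid_union[OF a(3) b(3)] a(4) b(4) by blast
  then show ?thesis unfolding in_grid_def using a b
    by (intro exI[of _ "\<mu> @ \<nu>"] exI[of _ "map (min 0) m @ map (min 0) n"]) auto
qed

lemma in_grid_UN: "finite I \<Longrightarrow> (\<And>i. i \<in> I \<Longrightarrow> in_grid (F i)) \<Longrightarrow> in_grid (\<Union>i\<in>I. F i)"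
  by (induction I rule: finite_induct) (auto simp: in_grid_empty in_grid_Un)


lemma coeff_notin: "m \<notin> supp L \<Longrightarrow> coeff L m = 0"
  by (simp add: coeff_def)

lemma G0_elem: "u \<in> G 0 \<Longrightarrow> expo u = cempty"
  by auto

lemma GSuc_supp: "u \<in> G (Suc N) \<Longrightarrow> supp (expo u) \<subseteq> G N"
  by auto

lemma lt_agree: "u \<in> G N \<Longrightarrow> v \<in> G N \<Longrightarrow> lt (Suc N) u v = lt N u v"
proof (induction N arbitrary: u v)
  case 0
  then show ?case by auto
next
  case (Suc N)
  from Suc.prems obtain b L c M where u: "u = Mono b L" and v: "v = Mono c M"
    and sL: "supp L \<subseteq> G N" and sM: "supp M \<subseteq> G N" by auto
  have key: "(\<exists>m. coeff L m < coeff M m \<and> (\<forall>n. lt (Suc N) m n \<longrightarrow> coeff L n = coeff M n))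
     \<longleftrightarrow> (\<exists>m. coeff L m < coeff M m \<and> (\<forall>n. lt N m n \<longrightarrow> coeff L n = coeff M n))"
  proof -
    have A: "(\<forall>n. lt (Suc N) m n \<longrightarrow> coeff L n = coeff M n) \<longleftrightarrow> (\<forall>n. lt N m n \<longrightarrow> coeff L n = coeff M n)"
      if "coeff L m < coeff M m" for m
    proof -
      have mG: "m \<in> G N" using that sL sM coeff_notin by (metis less_irrefl subsetD)
      have "(lt (Suc N) m n \<longrightarrow> coeff L n = coeff M n) \<longleftrightarrow> (lt N m n \<longrightarrow> coeff L n = coeff M n)" for n
      proof (cases "n \<in> supp L \<union> supp M")
        case True
        then have "n \<in> G N" using sL sM by blast
        then show ?thesis using Suc.IH[OF mG] by simp
      next
        case False then show ?thesis by (simp add: coeff_notin)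
      qed
      then show ?thesis by blast
    qed
    show ?thesis using A by blast
  qed
  show ?case unfolding u v using key by simp
qed

lemma mone_G: "mone \<in> G N"
  by (cases N) (auto simp: mone_def wf_ser_def intro!: exI[of _ "[]"])

lemma G_mono_Suc: "G N \<subseteq> G (Suc N)"
proof (induction N)
  case 0
  show ?case by (auto simp: wf_ser_def intro!: exI[of _ "[]"])
next
  case (Suc N)
  show ?case
  proof
    fix u assume "u \<in> G (Suc N)"
    then obtain b L \<mu> m0 where u: "u = Mono b L" "wf_ser L" "supp L \<subseteq> G N"
      "\<forall>m \<in> supp L. lt N mone m" "set \<mu> \<subseteq> G N" "\<forall>v \<in> set \<mu>. lt N v mone"
      "length m0 = length \<mu>" "supp L \<subseteq> grid \<mu> m0" by auto
    have "\<forall>m \<in> supp L. lt (Suc N) mone m" using u(3,4) lt_agree mone_G by blast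
    moreover have "\<forall>v \<in> set \<mu>. lt (Suc N) v mone" using u(5,6) lt_agree mone_G by blast
    ultimately show "u \<in> G (Suc (Suc N))" using u Suc.IH
      by simp (intro exI conjI; (blast | assumption)?)
  qed
qed

inductive_set hc :: "mono set \<Rightarrow> mono set" for S where
  base: "v \<in> S \<Longrightarrow> v \<in> hc S"
| step: "u \<in> hc S \<Longrightarrow> m \<in> supp (expo u) \<Longrightarrow> m \<in> hc S"

lemma hc_split: "hc S \<subseteq> S \<union> hc (\<Union>u\<in>S. supp (expo u))"
proof
  fix x assume "x \<in> hc S"
  then show "x \<in> S \<union> hc (\<Union>u\<in>S. supp (expo u))"
    by induction (auto intro: hc.intros)
qed

lemma hc_mono: "S \<subseteq> T \<Longrightarrow> hc S \<subseteq> hc T"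
proof
  fix x assume st: "S \<subseteq> T" and "x \<in> hc S"
  from this(2) show "x \<in> hc T" by induction (use st in \<open>auto intro: hc.intros\<close>)
qed

lemma hc_UN: "hc (\<Union>i\<in>I. F i) \<subseteq> (\<Union>i\<in>I. hc (F i))"
proof
  fix x assume "x \<in> hc (\<Union>i\<in>I. F i)"
  then show "x \<in> (\<Union>i\<in>I. hc (F i))" by induction (auto intro: hc.intros)
qed

lemma hc_empty: "hc {} = {}"
proof -
  have "x \<notin> hc {}" for x
  proof
    assume "x \<in> hc {}" then show False by induction auto
  qed
  then show ?thesis by blast
qed

lemma hc_hereditary: "hereditary (hc S)"
  unfolding hereditary_def using hc.step by (metis expo.simps subsetI)

lemma hc_G: "S \<subseteq> G M \<Longrightarrow> hc S \<subseteq> G M"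
proof
  fix x assume S: "S \<subseteq> G M" "x \<in> hc S"
  from S(2) show "x \<in> G M"
  proof induction
    case (base v) then show ?case using S by blast
  next
    case (step u m)
    show ?case
    proof (cases M)
      case 0 then show ?thesis using step G0_elem by fastforce
    next
      case (Suc N)
      then show ?thesis using step GSuc_supp G_mono_Suc by blast
    qed
  qed
qed

lemma hc_Gall: "S \<subseteq> Gall \<Longrightarrow> hc S \<subseteq> Gall"
proof
  fix x assume S: "S \<subseteq> Gall" "x \<in> hc S"
  from S(2) show "x \<in> Gall"
  proof induction
    case (base v) then show ?case using S by blast
  next
    case (step u m)
    then obtain M where uM: "u \<in> G M" by (auto simp: Gall_def)
    show ?case
    proof (cases M)
      case 0 then show ?thesis using step uM G0_elem by fastforce
    next
      case (Suc N)
      then show ?thesis using step uM GSuc_supp unfolding Gall_def by blast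
    qed
  qed
qed

lemma P_level: "u \<in> G N \<Longrightarrow> in_grid (hc (supp (expo u)))"
proof (induction N arbitrary: u)
  case 0
  then show ?case using G0_elem[OF 0] by (simp add: hc_empty in_grid_empty)
next
  case (Suc N)
  then obtain b L \<nu> n where u: "u = Mono b L" "set \<nu> \<subseteq> G N" "\<forall>v \<in> set \<nu>. lt N v mone"
      "length n = length \<nu>" "supp L \<subseteq> grid \<nu> n" by auto
  let ?S = "supp L"
  have gS: "in_grid ?S" unfolding in_grid_def mono_lt_def Gall_def
    using u mone_G by (intro exI[of _ \<nu>] exI[of _ n]) blast
  have T: "(\<Union>v\<in>?S. supp (expo v)) \<subseteq> (\<Union>v\<in>set \<nu>. supp (expo v))"
    using u(5) supp_mprod by (fastforce simp: grid_def)
  have "hc (\<Union>v\<in>?S. supp (expo v)) \<subseteq> (\<Union>v\<in>set \<nu>. hc (supp (expo v)))"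
    using hc_mono[OF T] hc_UN by blast
  moreover have "in_grid (\<Union>v\<in>set \<nu>. hc (supp (expo v)))"
    using u(2) Suc.IH by (intro in_grid_UN) auto
  ultimately have "in_grid (hc (\<Union>v\<in>?S. supp (expo v)))" using in_grid_subset by blast
  then have "in_grid (?S \<union> hc (\<Union>v\<in>?S. supp (expo v)))" using gS in_grid_Un by blast
  then show ?case using hc_split[of ?S] u(1) in_grid_subset by simp
qed

theorem proposition2p21:
  assumes "logfree_subgrid A"
  shows "\<exists>B. logfree_subgrid B \<and> hereditary B \<and> A \<subseteq> B \<and> height B = height A"
proof -
  from assms obtain \<mu> m0 where A: "A \<subseteq> Gall" "set \<mu> \<subseteq> Gall" "\<forall>u \<in> set \<mu>. mono_lt u mone"
    "length m0 = length \<mu>" "A \<subseteq> grid \<mu> m0" unfolding logfree_subgrid_def by blast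
  have gA: "in_grid A" unfolding in_grid_def using A by blast
  have T: "(\<Union>v\<in>A. supp (expo v)) \<subseteq> (\<Union>v\<in>set \<mu>. supp (expo v))"
    using A(5) supp_mprod by (fastforce simp: grid_def)
  have "hc (\<Union>v\<in>A. supp (expo v)) \<subseteq> (\<Union>v\<in>set \<mu>. hc (supp (expo v)))"
    using hc_mono[OF T] hc_UN by blast
  moreover have "in_grid (\<Union>v\<in>set \<mu>. hc (supp (expo v)))"
    using A(2) P_level unfolding Gall_def by (intro in_grid_UN) auto
  ultimately have "in_grid (hc (\<Union>v\<in>A. supp (expo v)))" using in_grid_subset by blast
  then have "in_grid (A \<union> hc (\<Union>v\<in>A. supp (expo v)))" using gA in_grid_Un by blast
  then have g: "in_grid (hc A)" using hc_split[of A] in_grid_subset by blast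
  have lf: "logfree_subgrid (hc A)" using g hc_Gall[OF A(1)]
    unfolding logfree_subgrid_def in_grid_def by blast
  have sub: "A \<subseteq> hc A" using hc.base by blast
  have eq: "(hc A \<subseteq> G M) = (A \<subseteq> G M)" for M using hc_G sub by blast
  have "height (hc A) = height A" unfolding height_def eq ..
  then show ?thesis using lf hc_hereditary sub by blast
qed

end
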